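(* Let $V$ be a set of propositional variables and let $\mu$ be a function assigning to every definable model set $\Sigma\subseteq\Pi V$ a subset $\mu(\Sigma)\subseteq\Sigma$; define $T\mathrel{|\!\sim}\psi$ iff $\mu(M(T))\subseteq M(\psi)$. Say that $\mathrel{|\!\sim}$ has interpolation iff for all definable $\Sigma,\Sigma'\subseteq\Pi V$ with $\mu(\Sigma)\subseteq\Sigma'$ there is a definable $\Sigma''$ with $\mu(\Sigma)\subseteq\Sigma''\subseteq\Sigma'$ and $R(\Sigma'')\subseteq R(\Sigma)\cap R(\Sigma')$. (a) If $V$ is finite, then $\mathrel{|\!\sim}$ has interpolation iff $I(\Sigma)\subseteq I(\mu(\Sigma))$ for all $\Sigma\subseteq\Pi V$. (b) If $V$ is infinite and $\mu(\Sigma)$ is definable whenever $\Sigma$ is definable, then $\mathrel{|\!\sim}$ has interpolation iff $I(\Sigma)\subseteq I(\mu(\Sigma))$ for all definable $\Sigma\subseteq\Pi V$.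
   Context: Classical propositional logic: $\Pi V$ is the set of all assignments $V\to\{\mathrm{TRUE},\mathrm{FALSE}\}$ (models), $M(T)$ the set of models of a theory $T$, and a set of models is definable if it equals $M(T)$ for some theory $T$ (in a finite language every set of models is definable). For $\Sigma\subseteq\Pi V$, a variable $p$ is irrelevant for $\Sigma$ if changing the value of $p$ in any element of $\Sigma$ yields again an element of $\Sigma$; $I(\Sigma)$ is the set of irrelevant variables and $R(\Sigma):=V-I(\Sigma)$ the set of relevant (essential) variables. *)

theory Defs
  imports Main
begin

text \<open>Classical propositional logic over the variable set V, represented as the type 'v.
  A model is an assignment 'v \<Rightarrow> bool (True = TRUE, False = FALSE); \<Pi>V is the whole type.\<close>

datatype 'v form =
    Var 'v
  | Top
  | Bot
  | Neg "'v form"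
  | Conj "'v form" "'v form"
  | Disj "'v form" "'v form"
  | Imp "'v form" "'v form"

fun sat :: "('v \<Rightarrow> bool) \<Rightarrow> 'v form \<Rightarrow> bool" where
  "sat m (Var p) = m p"
| "sat m Top = True"
| "sat m Bot = False"
| "sat m (Neg \<phi>) = (\<not> sat m \<phi>)"
| "sat m (Conj \<phi> \<psi>) = (sat m \<phi> \<and> sat m \<psi>)"
| "sat m (Disj \<phi> \<psi>) = (sat m \<phi> \<or> sat m \<psi>)"
| "sat m (Imp \<phi> \<psi>) = (sat m \<phi> \<longrightarrow> sat m \<psi>)"

definition Mod1 :: "'v form \<Rightarrow> ('v \<Rightarrow> bool) set" where
  "Mod1 \<psi> = {m. sat m \<psi>}"

definition Mod :: "'v form set \<Rightarrow> ('v \<Rightarrow> bool) set" where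
  "Mod T = {m. \<forall>\<phi>\<in>T. sat m \<phi>}"

definition definable :: "('v \<Rightarrow> bool) set \<Rightarrow> bool" where
  "definable \<Sigma> \<longleftrightarrow> (\<exists>T. \<Sigma> = Mod T)"

definition irrelevant :: "('v \<Rightarrow> bool) set \<Rightarrow> 'v \<Rightarrow> bool" where
  "irrelevant \<Sigma> p \<longleftrightarrow> (\<forall>m\<in>\<Sigma>. m(p := \<not> m p) \<in> \<Sigma>)"

definition Irr :: "('v \<Rightarrow> bool) set \<Rightarrow> 'v set" where
  "Irr \<Sigma> = {p. irrelevant \<Sigma> p}"

definition Rel :: "('v \<Rightarrow> bool) set \<Rightarrow> 'v set" where
  "Rel \<Sigma> = UNIV - Irr \<Sigma>"

definition nm_cons :: "(('v \<Rightarrow> bool) set \<Rightarrow> ('v \<Rightarrow> bool) set) \<Rightarrow> 'v form set \<Rightarrow> 'v form \<Rightarrow> bool" where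
  "nm_cons \<mu> T \<psi> \<longleftrightarrow> \<mu> (Mod T) \<subseteq> Mod1 \<psi>"

definition has_interpolation :: "(('v \<Rightarrow> bool) set \<Rightarrow> ('v \<Rightarrow> bool) set) \<Rightarrow> bool" where
  "has_interpolation \<mu> \<longleftrightarrow>
     (\<forall>\<Sigma> \<Sigma>'. definable \<Sigma> \<and> definable \<Sigma>' \<and> \<mu> \<Sigma> \<subseteq> \<Sigma>' \<longrightarrow>
        (\<exists>\<Sigma>''. definable \<Sigma>'' \<and> \<mu> \<Sigma> \<subseteq> \<Sigma>'' \<and> \<Sigma>'' \<subseteq> \<Sigma>' \<and>
                Rel \<Sigma>'' \<subseteq> Rel \<Sigma> \<inter> Rel \<Sigma>'))"

end

theory Submission
  imports Defs
begin

fun vars :: "'v form \<Rightarrow> 'v set" where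
  "vars (Var p) = {p}"
| "vars Top = {}"
| "vars Bot = {}"
| "vars (Neg \<phi>) = vars \<phi>"
| "vars (Conj \<phi> \<psi>) = vars \<phi> \<union> vars \<psi>"
| "vars (Disj \<phi> \<psi>) = vars \<phi> \<union> vars \<psi>"
| "vars (Imp \<phi> \<psi>) = vars \<phi> \<union> vars \<psi>"

lemma finite_vars: "finite (vars \<phi>)"
  by (induction \<phi>) auto

lemma sat_agree: "(\<And>p. p \<in> vars \<phi> \<Longrightarrow> m p = n p) \<Longrightarrow> sat m \<phi> = sat n \<phi>"
  by (induction \<phi>) auto

definition lit :: "('v \<Rightarrow> bool) \<Rightarrow> 'v \<Rightarrow> 'v form" where
  "lit m p = (if m p then Var p else Neg (Var p))"

definition lits :: "('v \<Rightarrow> bool) \<Rightarrow> 'v list \<Rightarrow> 'v form" where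
  "lits m xs = foldr (\<lambda>p acc. Conj (lit m p) acc) xs Top"

lemma sat_lits: "sat n (lits m xs) \<longleftrightarrow> (\<forall>p\<in>set xs. n p = m p)"
  by (induction xs) (auto simp: lits_def lit_def)

lemma vars_lits: "vars (lits m xs) = set xs"
  by (induction xs) (auto simp: lits_def lit_def)

lemma flip_finite:
  assumes "finite D" "x \<in> \<Sigma>" "D \<subseteq> Irr \<Sigma>" "\<forall>p. p \<notin> D \<longrightarrow> z p = x p"
  shows "z \<in> \<Sigma>"
  using assms
proof (induction D arbitrary: z rule: finite_induct)
  case empty
  have "z = x" by (rule ext) (use empty.prems(3) in simp)
  then show ?case using empty.prems(1) by simp
next
  case (insert a D)
  define z' where "z' = z(a := x a)"
  have "z' \<in> \<Sigma>"
  proof (rule insert.IH)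
    show "x \<in> \<Sigma>" by (rule insert.prems(1))
    show "D \<subseteq> Irr \<Sigma>" using insert.prems(2) by simp
    show "\<forall>p. p \<notin> D \<longrightarrow> z' p = x p" using insert.prems(3) by (simp add: z'_def)
  qed
  show ?case
  proof (cases "z a = x a")
    case True
    have "z = z'" by (rule ext) (simp add: z'_def True)
    then show ?thesis using \<open>z' \<in> \<Sigma>\<close> by simp
  next
    case False
    have e: "z = z'(a := \<not> z' a)" by (rule ext) (use False in \<open>simp add: z'_def\<close>)
    have "irrelevant \<Sigma> a" using insert.prems(2) by (simp add: Irr_def)
    then have "z'(a := \<not> z' a) \<in> \<Sigma>" using \<open>z' \<in> \<Sigma>\<close> unfolding irrelevant_def by blast
    then show ?thesis unfolding e .
  qed
qed

lemma flip_closed: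
  assumes "definable \<Sigma>" "x \<in> \<Sigma>" "\<forall>p. x p \<noteq> y p \<longrightarrow> p \<in> Irr \<Sigma>"
  shows "y \<in> \<Sigma>"
proof -
  obtain T where T: "\<Sigma> = Mod T" using assms(1) by (auto simp: definable_def)
  have "sat y \<phi>" if "\<phi> \<in> T" for \<phi>
  proof -
    define z where "z = (\<lambda>p. if p \<in> vars \<phi> then y p else x p)"
    have fin: "finite {p \<in> vars \<phi>. x p \<noteq> y p}"
      by (rule finite_subset[OF _ finite_vars[of \<phi>]]) auto
    have "z \<in> \<Sigma>"
      by (rule flip_finite[OF fin assms(2)]) (use assms in \<open>auto simp: z_def\<close>)
    then have "sat z \<phi>" using T that by (auto simp: Mod_def)
    moreover have "sat z \<phi> = sat y \<phi>" by (rule sat_agree) (auto simp: z_def)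
    ultimately show ?thesis by simp
  qed
  then show ?thesis using T by (auto simp: Mod_def)
qed

lemma all_definable:
  assumes "finite (UNIV :: 'v set)"
  shows "definable (S :: ('v \<Rightarrow> bool) set)"
proof -
  obtain xs :: "'v list" where xs: "set xs = UNIV" using finite_list[OF assms] by blast
  define T where "T = {\<phi>. S \<subseteq> Mod1 \<phi>}"
  have "S = Mod T"
  proof
    show "S \<subseteq> Mod T" by (auto simp: T_def Mod_def Mod1_def)
    show "Mod T \<subseteq> S"
    proof
      fix m assume m: "m \<in> Mod T"
      show "m \<in> S"
      proof (rule ccontr)
        assume "m \<notin> S"
        have "\<not> sat x (lits m xs)" if "x \<in> S" for x
        proof
          assume "sat x (lits m xs)"
          then have "x = m" by (auto simp: sat_lits xs)
          then show False using that \<open>m \<notin> S\<close> by simp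
        qed
        then have "S \<subseteq> Mod1 (Neg (lits m xs))"
          by (auto simp: Mod1_def)
        then have "Neg (lits m xs) \<in> T" by (simp add: T_def)
        then show False using m by (auto simp: Mod_def sat_lits)
      qed
    qed
  qed
  then show ?thesis by (auto simp: definable_def)
qed

lemma backward:
  assumes mu_sub: "\<And>\<Sigma>. definable \<Sigma> \<Longrightarrow> \<mu> \<Sigma> \<subseteq> \<Sigma>"
    and mu_def: "\<And>\<Sigma>. definable \<Sigma> \<Longrightarrow> definable (\<mu> \<Sigma>)"
    and irr: "\<And>\<Sigma>. definable \<Sigma> \<Longrightarrow> Irr \<Sigma> \<subseteq> Irr (\<mu> \<Sigma>)"
  shows "has_interpolation \<mu>"
  unfolding has_interpolation_def
proof (intro allI impI)
  fix \<Sigma> \<Sigma>' :: "('a \<Rightarrow> bool) set"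
  assume H: "definable \<Sigma> \<and> definable \<Sigma>' \<and> \<mu> \<Sigma> \<subseteq> \<Sigma>'"
  define J where "J = Rel \<Sigma> \<inter> Rel \<Sigma>'"
  define T'' where "T'' = {\<phi>. vars \<phi> \<subseteq> J \<and> \<mu> \<Sigma> \<subseteq> Mod1 \<phi>}"
  define S where "S = Mod T''"
  have d: "definable S" by (auto simp: S_def definable_def)
  have sub1: "\<mu> \<Sigma> \<subseteq> S" by (auto simp: S_def T''_def Mod_def Mod1_def)
  have rel: "Rel S \<subseteq> J"
  proof
    fix p assume "p \<in> Rel S"
    show "p \<in> J"
    proof (rule ccontr)
      assume pJ: "p \<notin> J"
      have "irrelevant S p" unfolding irrelevant_def
      proof
        fix m assume "m \<in> S"
        have "sat (m(p := \<not> m p)) \<phi>" if "\<phi> \<in> T''" for \<phi>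
        proof -
          have "sat m \<phi>" using \<open>m \<in> S\<close> that by (auto simp: S_def Mod_def)
          moreover have "sat (m(p := \<not> m p)) \<phi> = sat m \<phi>"
            by (rule sat_agree) (use that pJ in \<open>auto simp: T''_def\<close>)
          ultimately show ?thesis by simp
        qed
        then show "m(p := \<not> m p) \<in> S" by (auto simp: S_def Mod_def)
      qed
      then show False using \<open>p \<in> Rel S\<close> by (auto simp: Rel_def Irr_def)
    qed
  qed
  have sub2: "S \<subseteq> \<Sigma>'"
  proof
    fix m assume m: "m \<in> S"
    obtain T' where T': "\<Sigma>' = Mod T'" using H by (auto simp: definable_def)
    have "sat m \<psi>" if \<psi>: "\<psi> \<in> T'" for \<psi>
    proof -
      define K where "K = vars \<psi> \<inter> J"
      have "finite K" using finite_vars by (auto simp: K_def)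
      then obtain xs where xs: "set xs = K" using finite_list by blast
      have "\<exists>n\<in>\<mu> \<Sigma>. \<forall>p\<in>K. n p = m p"
      proof (rule ccontr)
        assume "\<not> ?thesis"
        then have "\<mu> \<Sigma> \<subseteq> Mod1 (Neg (lits m xs))" by (auto simp: Mod1_def sat_lits xs)
        moreover have "vars (Neg (lits m xs)) \<subseteq> J" by (auto simp: vars_lits xs K_def)
        ultimately have "Neg (lits m xs) \<in> T''" by (simp add: T''_def)
        then show False using m by (auto simp: S_def Mod_def sat_lits)
      qed
      then obtain n where n: "n \<in> \<mu> \<Sigma>" "\<forall>p\<in>K. n p = m p" by blast
      define n' where "n' = (\<lambda>p. if p \<in> Irr \<Sigma> then m p else n p)"
      have "n' \<in> \<mu> \<Sigma>"
        by (rule flip_closed[OF mu_def n(1)]) (use H irr in \<open>auto simp: n'_def\<close>)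
      then have "n' \<in> \<Sigma>'" using H by auto
      define y where "y = (\<lambda>p. if p \<in> vars \<psi> then m p else n' p)"
      have "y \<in> \<Sigma>'"
      proof (rule flip_closed[OF _ \<open>n' \<in> \<Sigma>'\<close>])
        show "definable \<Sigma>'" using H by simp
        show "\<forall>p. n' p \<noteq> y p \<longrightarrow> p \<in> Irr \<Sigma>'"
        proof (intro allI impI)
          fix p assume ne: "n' p \<noteq> y p"
          then have pv: "p \<in> vars \<psi>" and mn: "m p \<noteq> n' p" by (auto simp: y_def split: if_splits)
          then have "p \<notin> Irr \<Sigma>" by (auto simp: n'_def)
          show "p \<in> Irr \<Sigma>'"
          proof (rule ccontr)
            assume "p \<notin> Irr \<Sigma>'"
            then have "p \<in> K" using \<open>p \<notin> Irr \<Sigma>\<close> pv by (auto simp: K_def J_def Rel_def)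
            then show False using n(2) mn \<open>p \<notin> Irr \<Sigma>\<close> by (auto simp: n'_def)
          qed
        qed
      qed
      then have "sat y \<psi>" using T' \<psi> by (auto simp: Mod_def)
      moreover have "sat y \<psi> = sat m \<psi>" by (rule sat_agree) (auto simp: y_def)
      ultimately show ?thesis by simp
    qed
    then show "m \<in> \<Sigma>'" using T' by (auto simp: Mod_def)
  qed
  show "\<exists>\<Sigma>''. definable \<Sigma>'' \<and> \<mu> \<Sigma> \<subseteq> \<Sigma>'' \<and> \<Sigma>'' \<subseteq> \<Sigma>' \<and> Rel \<Sigma>'' \<subseteq> Rel \<Sigma> \<inter> Rel \<Sigma>'"
    using d sub1 sub2 rel[unfolded J_def] by (intro exI[of _ S]) simp
qed

lemma forward:
  assumes hi: "has_interpolation \<mu>" and d: "definable \<Sigma>" and dm: "definable (\<mu> \<Sigma>)"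
  shows "Irr \<Sigma> \<subseteq> Irr (\<mu> \<Sigma>)"
proof -
  obtain S where S: "\<mu> \<Sigma> \<subseteq> S" "S \<subseteq> \<mu> \<Sigma>" "Rel S \<subseteq> Rel \<Sigma> \<inter> Rel (\<mu> \<Sigma>)"
    using hi d dm unfolding has_interpolation_def by (meson order_refl)
  have "S = \<mu> \<Sigma>" by (rule subset_antisym[OF S(2) S(1)])
  then have "Rel (\<mu> \<Sigma>) \<subseteq> Rel \<Sigma>" using S(3) by simp
  then show ?thesis unfolding Rel_def by blast
qed

theorem fact4p2:
  fixes \<mu> :: "('v \<Rightarrow> bool) set \<Rightarrow> ('v \<Rightarrow> bool) set"
  assumes mu_sub: "\<And>\<Sigma>. definable \<Sigma> \<Longrightarrow> \<mu> \<Sigma> \<subseteq> \<Sigma>"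
  shows "(finite (UNIV :: 'v set) \<longrightarrow>
            (has_interpolation \<mu> \<longleftrightarrow> (\<forall>\<Sigma>. Irr \<Sigma> \<subseteq> Irr (\<mu> \<Sigma>))))
       \<and> (infinite (UNIV :: 'v set) \<and> (\<forall>\<Sigma>. definable \<Sigma> \<longrightarrow> definable (\<mu> \<Sigma>)) \<longrightarrow>
            (has_interpolation \<mu> \<longleftrightarrow> (\<forall>\<Sigma>. definable \<Sigma> \<longrightarrow> Irr \<Sigma> \<subseteq> Irr (\<mu> \<Sigma>))))"
proof (intro conjI impI)
  assume f: "finite (UNIV :: 'v set)"
  have ad: "\<And>S :: ('v \<Rightarrow> bool) set. definable S" using all_definable[OF f] .
  show "has_interpolation \<mu> \<longleftrightarrow> (\<forall>\<Sigma>. Irr \<Sigma> \<subseteq> Irr (\<mu> \<Sigma>))"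
  proof
    assume "has_interpolation \<mu>"
    then show "\<forall>\<Sigma>. Irr \<Sigma> \<subseteq> Irr (\<mu> \<Sigma>)" using forward[OF _ ad ad] by simp
  next
    assume "\<forall>\<Sigma>. Irr \<Sigma> \<subseteq> Irr (\<mu> \<Sigma>)"
    then show "has_interpolation \<mu>" by (intro backward[OF mu_sub]) (auto simp: ad)
  qed
next
  assume a: "infinite (UNIV :: 'v set) \<and> (\<forall>\<Sigma>. definable \<Sigma> \<longrightarrow> definable (\<mu> \<Sigma>))"
  show "has_interpolation \<mu> \<longleftrightarrow> (\<forall>\<Sigma>. definable \<Sigma> \<longrightarrow> Irr \<Sigma> \<subseteq> Irr (\<mu> \<Sigma>))"
  proof
    assume "has_interpolation \<mu>"
    then show "\<forall>\<Sigma>. definable \<Sigma> \<longrightarrow> Irr \<Sigma> \<subseteq> Irr (\<mu> \<Sigma>)" using forward[of \<mu>] a by simp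
  next
    assume "\<forall>\<Sigma>. definable \<Sigma> \<longrightarrow> Irr \<Sigma> \<subseteq> Irr (\<mu> \<Sigma>)"
    then show "has_interpolation \<mu>" by (intro backward[OF mu_sub]) (use a in auto)
  qed
qed

end
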